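(* Let $f:[0,1]\to\mathbb R$ be Lipschitz continuous and $a<b$ real numbers. Then $\int_{f^{-1}((a,b))}f'(t)\,dt\in[a-b,\,b-a]$. *)

theory Defs
  imports "HOL-Analysis.Analysis"
begin

end

theory Submission
  imports Defs
begin


lemma negligible_countable_set: "countable (A::'a::euclidean_space set) \<Longrightarrow> negligible A"
proof -
  assume "countable A"
  then have "negligible (\<Union>((\<lambda>x. {x}) ` A))"
    by (intro negligible_countable_Union) auto
  then show ?thesis by simp
qed

lemma borel_imp_lebesgue: "A \<in> sets borel \<Longrightarrow> (A::'a::euclidean_space set) \<in> sets lebesgue"
proof -
  have "sets borel \<subseteq> sets (lebesgue :: 'a measure)" by force
  then show "A \<in> sets borel \<Longrightarrow> A \<in> sets lebesgue" by blast
qed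

lemma cball_real_interval: "c \<le> d \<Longrightarrow> cball ((c+d)/2) ((d-c)/2) = {c..(d::real)}"
  by (simp add: cball_eq_atLeastAtMost field_simps)

lemma core:
  fixes \<phi> :: "real \<Rightarrow> real" and E :: "real set"
  assumes mono: "mono \<phi>" and cont: "continuous_on UNIV \<phi>"
    and Es: "E \<in> lmeasurable"
    and pq: "p < q"
    and lo: "\<And>x e. x \<in> E \<Longrightarrow> e > 0 \<Longrightarrow> \<exists>c d. c < d \<and> c \<le> x \<and> x \<le> d \<and> d - c < e \<and> \<phi> d - \<phi> c < p * (d - c)"
    and hi: "\<And>x e. x \<in> E \<Longrightarrow> e > 0 \<Longrightarrow> \<exists>c d. c < d \<and> c \<le> x \<and> x \<le> d \<and> d - c < e \<and> \<phi> d - \<phi> c > q * (d - c)"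
  shows "negligible E"
proof (cases "E = {}")
  case True then show ?thesis by simp
next
  case False
  then obtain x0 where "x0 \<in> E" by blast
  from lo[OF this, of 1] obtain c0 d0 where "c0 < d0" "\<phi> d0 - \<phi> c0 < p * (d0 - c0)" by auto
  moreover have "\<phi> c0 \<le> \<phi> d0" using mono \<open>c0 < d0\<close> by (simp add: mono_def)
  ultimately have p0: "p > 0"
    by (smt (verit, best) mult_nonpos_nonneg)
  have q0: "q > 0" using p0 pq by simp
  define s where "s = measure lebesgue E"
  have s0: "s \<ge> 0" by (simp add: s_def)
  have Eleb: "emeasure lebesgue E = ennreal s"
    using Es by (simp add: s_def emeasure_eq_measure2)
  have Esets: "E \<in> sets lebesgue" using Es by (simp add: fmeasurable_def)
  let ?\<mu> = "interval_measure \<phi>"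
  have muI: "emeasure ?\<mu> {c..d} = ennreal (\<phi> d - \<phi> c)" if "c \<le> d" for c d
    using emeasure_interval_measure_Icc[OF that _ cont, of] mono by (simp add: mono_def)
  have key: "q * s \<le> p * (s + \<epsilon>)" if "\<epsilon> > 0" for \<epsilon>
  proof -
    obtain U where U: "open U" "E \<subseteq> U" "(U - E) \<in> lmeasurable" "emeasure lebesgue (U - E) < ennreal \<epsilon>"
      using sets_lebesgue_outer_open[OF Esets \<open>\<epsilon> > 0\<close>] by blast
    have Usets: "U \<in> sets lebesgue" using U(1) by simp
    have "emeasure lebesgue U \<le> emeasure lebesgue E + emeasure lebesgue (U - E)"
    proof -
      have "U = E \<union> (U - E)" using U(2) by blast
      then have "emeasure lebesgue U = emeasure lebesgue (E \<union> (U - E))" by simp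
      also have "\<dots> \<le> emeasure lebesgue E + emeasure lebesgue (U - E)"
        using Esets U(3) by (intro emeasure_subadditive) (auto simp: fmeasurable_def)
      finally show ?thesis .
    qed
    also have "\<dots> \<le> ennreal s + ennreal \<epsilon>" using U(4) Eleb by simp
    finally have Ule: "emeasure lebesgue U \<le> ennreal (s + \<epsilon>)" using s0 that by (simp add: ennreal_plus)
    define I where "I = (\<lambda>i::real\<times>real. {fst i..snd i})"
    define K1 where "K1 = {(c,d). c < d \<and> {c..d} \<subseteq> U \<and> \<phi> d - \<phi> c < p * (d - c)}"
    have cbI: "cball ((\<lambda>(c,d). (c+d)/2) i) ((\<lambda>(c,d). (d-c)/2) i) = I i" if "fst i < snd i" for i
      using that cball_real_interval[of "fst i" "snd i"] by (cases i) (auto simp: I_def)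
    obtain C1 where C1: "countable C1" "C1 \<subseteq> K1"
      "pairwise (\<lambda>i j. disjnt (cball ((\<lambda>(c,d). (c+d)/2) i) ((\<lambda>(c,d). (d-c)/2) i))
                               (cball ((\<lambda>(c,d). (c+d)/2) j) ((\<lambda>(c,d). (d-c)/2) j))) C1"
      "negligible (E - (\<Union>i\<in>C1. cball ((\<lambda>(c,d). (c+d)/2) i) ((\<lambda>(c,d). (d-c)/2) i)))"
    proof (rule Vitali_covering_theorem_cballs[of K1 "\<lambda>(c,d). (d-c)/2" E "\<lambda>(c,d). (c+d)/2"])
      show "0 < (\<lambda>(c,d). (d-c)/2) i" if "i \<in> K1" for i using that by (auto simp: K1_def)
      show "\<exists>i. i \<in> K1 \<and> x \<in> cball ((\<lambda>(c,d). (c+d)/2) i) ((\<lambda>(c,d). (d-c)/2) i) \<and> (\<lambda>(c,d). (d-c)/2) i < d"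
        if "x \<in> E" "0 < d" for x d
      proof -
        obtain \<delta> where "\<delta> > 0" "ball x \<delta> \<subseteq> U" using U(1,2) \<open>x \<in> E\<close> open_contains_ball by blast
        obtain c' d' where cd: "c' < d'" "c' \<le> x" "x \<le> d'" "d' - c' < min \<delta> d" "\<phi> d' - \<phi> c' < p * (d' - c')"
          using lo[OF \<open>x \<in> E\<close>, of "min \<delta> d"] \<open>\<delta> > 0\<close> \<open>d > 0\<close> by auto
        have "{c'..d'} \<subseteq> ball x \<delta>" using cd by (auto simp: dist_real_def)
        then have "(c',d') \<in> K1" using cd \<open>ball x \<delta> \<subseteq> U\<close> by (auto simp: K1_def)
        moreover have "x \<in> cball ((\<lambda>(c,d). (c+d)/2) (c',d')) ((\<lambda>(c,d). (d-c)/2) (c',d'))"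
          using cbI[of "(c',d')"] cd by (auto simp: I_def)
        ultimately show ?thesis using cd by (intro exI[of _ "(c',d')"]) auto
      qed
    qed blast
    have K1I: "fst i < snd i" "I i \<subseteq> U" "\<phi> (snd i) - \<phi> (fst i) < p * (snd i - fst i)" if "i \<in> C1" for i
      using that C1(2) by (force simp: K1_def I_def)+
    have disj1: "disjoint_family_on I C1"
      using C1(3) cbI K1I(1) unfolding disjoint_family_on_def pairwise_def disjnt_def by metis
    have neg1: "negligible (E - \<Union>(I ` C1))"
      using C1(4) cbI K1I(1) by (metis (no_types, lifting) SUP_cong)
    define V1 where "V1 = \<Union>(I ` C1)"
    have Isets: "I i \<in> sets borel" for i by (simp add: I_def)
    have V1sets: "V1 \<in> sets borel" unfolding V1_def using C1(1) Isets by (intro sets.countable_UN'') auto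
    have m1: "emeasure ?\<mu> V1 \<le> ennreal p * emeasure lebesgue V1"
    proof -
      have "emeasure ?\<mu> V1 = (\<integral>\<^sup>+i. emeasure ?\<mu> (I i) \<partial>count_space C1)"
        unfolding V1_def using Isets C1(1) disj1 by (intro emeasure_UN_countable) auto
      also have "\<dots> \<le> (\<integral>\<^sup>+i. ennreal p * emeasure lebesgue (I i) \<partial>count_space C1)"
      proof (rule nn_integral_mono)
        fix i assume "i \<in> space (count_space C1)"
        then have i: "i \<in> C1" by simp
        have "emeasure ?\<mu> (I i) = ennreal (\<phi> (snd i) - \<phi> (fst i))"
          using muI K1I(1)[OF i] by (simp add: I_def)
        also have "\<dots> \<le> ennreal (p * (snd i - fst i))" using K1I(3)[OF i] by (intro ennreal_leI) simp
        also have "\<dots> = ennreal p * emeasure lebesgue (I i)"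
          using K1I(1)[OF i] p0 by (simp add: I_def ennreal_mult)
        finally show "emeasure ?\<mu> (I i) \<le> ennreal p * emeasure lebesgue (I i)" .
      qed
      also have "\<dots> = ennreal p * (\<integral>\<^sup>+i. emeasure lebesgue (I i) \<partial>count_space C1)"
        by (rule nn_integral_cmult) simp
      also have "(\<integral>\<^sup>+i. emeasure lebesgue (I i) \<partial>count_space C1) = emeasure lebesgue V1"
        unfolding V1_def using Isets C1(1) disj1 by (intro emeasure_UN_countable[symmetric]) auto
      finally show ?thesis .
    qed
    define J where "J = (\<lambda>i::real\<times>real. {fst i<..<snd i})"
    define A where "A = E \<inter> \<Union>(J ` C1)"
    define K2 where "K2 = {(c,d). c < d \<and> (\<exists>i\<in>C1. {c..d} \<subseteq> J i) \<and> q * (d - c) < \<phi> d - \<phi> c}"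
    obtain C2 where C2: "countable C2" "C2 \<subseteq> K2"
      "pairwise (\<lambda>i j. disjnt (cball ((\<lambda>(c,d). (c+d)/2) i) ((\<lambda>(c,d). (d-c)/2) i))
                               (cball ((\<lambda>(c,d). (c+d)/2) j) ((\<lambda>(c,d). (d-c)/2) j))) C2"
      "negligible (A - (\<Union>i\<in>C2. cball ((\<lambda>(c,d). (c+d)/2) i) ((\<lambda>(c,d). (d-c)/2) i)))"
    proof (rule Vitali_covering_theorem_cballs[of K2 "\<lambda>(c,d). (d-c)/2" A "\<lambda>(c,d). (c+d)/2"])
      show "0 < (\<lambda>(c,d). (d-c)/2) i" if "i \<in> K2" for i using that by (auto simp: K2_def)
      show "\<exists>i. i \<in> K2 \<and> x \<in> cball ((\<lambda>(c,d). (c+d)/2) i) ((\<lambda>(c,d). (d-c)/2) i) \<and> (\<lambda>(c,d). (d-c)/2) i < d"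
        if "x \<in> A" "0 < d" for x d
      proof -
        from \<open>x \<in> A\<close> obtain i where i: "i \<in> C1" "x \<in> J i" "x \<in> E" by (auto simp: A_def)
        have "open (J i)" by (simp add: J_def)
        then obtain \<delta> where "\<delta> > 0" "ball x \<delta> \<subseteq> J i" using i open_contains_ball by blast
        obtain c' d' where cd: "c' < d'" "c' \<le> x" "x \<le> d'" "d' - c' < min \<delta> d" "\<phi> d' - \<phi> c' > q * (d' - c')"
          using hi[OF \<open>x \<in> E\<close>, of "min \<delta> d"] \<open>\<delta> > 0\<close> \<open>d > 0\<close> by auto
        have "{c'..d'} \<subseteq> ball x \<delta>" using cd by (auto simp: dist_real_def)
        then have "(c',d') \<in> K2" using cd \<open>ball x \<delta> \<subseteq> J i\<close> i by (auto simp: K2_def)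
        moreover have "x \<in> cball ((\<lambda>(c,d). (c+d)/2) (c',d')) ((\<lambda>(c,d). (d-c)/2) (c',d'))"
          using cbI[of "(c',d')"] cd by (auto simp: I_def)
        ultimately show ?thesis using cd by (intro exI[of _ "(c',d')"]) auto
      qed
    qed blast
    have K2I: "fst i < snd i" "\<exists>j\<in>C1. I i \<subseteq> J j" "q * (snd i - fst i) < \<phi> (snd i) - \<phi> (fst i)" if "i \<in> C2" for i
      using that C2(2) by (force simp: K2_def I_def)+
    have disj2: "disjoint_family_on I C2"
      using C2(3) cbI K2I(1) unfolding disjoint_family_on_def pairwise_def disjnt_def by metis
    have neg2: "negligible (A - \<Union>(I ` C2))"
      using C2(4) cbI K2I(1) by (metis (no_types, lifting) SUP_cong)
    define V2 where "V2 = \<Union>(I ` C2)"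
    have V2sets: "V2 \<in> sets borel" unfolding V2_def using C2(1) Isets by (intro sets.countable_UN'') auto
    have m2: "ennreal q * emeasure lebesgue V2 \<le> emeasure ?\<mu> V2"
    proof -
      have "emeasure lebesgue V2 = (\<integral>\<^sup>+i. emeasure lebesgue (I i) \<partial>count_space C2)"
        unfolding V2_def using Isets C2(1) disj2 by (intro emeasure_UN_countable) auto
      then have "ennreal q * emeasure lebesgue V2 = (\<integral>\<^sup>+i. ennreal q * emeasure lebesgue (I i) \<partial>count_space C2)"
        by (simp add: nn_integral_cmult)
      also have "\<dots> \<le> (\<integral>\<^sup>+i. emeasure ?\<mu> (I i) \<partial>count_space C2)"
      proof (rule nn_integral_mono)
        fix i assume "i \<in> space (count_space C2)"
        then have i: "i \<in> C2" by simp
        have "ennreal q * emeasure lebesgue (I i) = ennreal (q * (snd i - fst i))"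
          using K2I(1)[OF i] q0 by (simp add: I_def ennreal_mult)
        also have "\<dots> \<le> ennreal (\<phi> (snd i) - \<phi> (fst i))" using K2I(3)[OF i] by (intro ennreal_leI) simp
        also have "\<dots> = emeasure ?\<mu> (I i)"
          using muI K2I(1)[OF i] by (simp add: I_def)
        finally show "ennreal q * emeasure lebesgue (I i) \<le> emeasure ?\<mu> (I i)" .
      qed
      also have "\<dots> = emeasure ?\<mu> V2"
        unfolding V2_def using Isets C2(1) disj2 by (intro emeasure_UN_countable[symmetric]) auto
      finally show ?thesis .
    qed
    have V21: "V2 \<subseteq> V1"
    proof
      fix x assume "x \<in> V2"
      then obtain i where "i \<in> C2" "x \<in> I i" by (auto simp: V2_def)
      then obtain j where "j \<in> C1" "I i \<subseteq> J j" using K2I(2) by blast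
      then have "x \<in> I j" using \<open>x \<in> I i\<close> by (auto simp: I_def J_def)
      then show "x \<in> V1" using \<open>j \<in> C1\<close> by (auto simp: V1_def)
    qed
    have V1U: "V1 \<subseteq> U" using K1I(2) by (auto simp: V1_def)
    define N where "N = (A - V2) \<union> (E - V1) \<union> (fst ` C1 \<union> snd ` C1)"
    have negN: "negligible N"
      unfolding N_def using neg1 neg2 C1(1)
      by (auto simp: V1_def V2_def intro!: negligible_countable_set)
    have EN: "E \<subseteq> V2 \<union> N"
    proof
      fix x assume "x \<in> E"
      show "x \<in> V2 \<union> N"
      proof (cases "x \<in> V1")
        case False then show ?thesis using \<open>x \<in> E\<close> by (auto simp: N_def)
      next
        case True
        then obtain i where i: "i \<in> C1" "x \<in> I i" by (auto simp: V1_def)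
        show ?thesis
        proof (cases "x \<in> J i")
          case True
          then have "x \<in> A" using i \<open>x \<in> E\<close> by (auto simp: A_def)
          then show ?thesis by (auto simp: N_def)
        next
          case False
          then have "x = fst i \<or> x = snd i" using i by (auto simp: I_def J_def)
          then show ?thesis using i by (auto simp: N_def)
        qed
      qed
    qed
    have "emeasure lebesgue E \<le> emeasure lebesgue (V2 \<union> N)"
      using EN V2sets negN by (intro emeasure_mono) (auto intro: negligible_imp_sets)
    also have "\<dots> \<le> emeasure lebesgue V2 + emeasure lebesgue N"
      using V2sets negN by (intro emeasure_subadditive) (auto intro: negligible_imp_sets)
    also have "emeasure lebesgue N = 0"
      using negN by (simp add: negligible_iff_null_sets null_setsD1)
    finally have EV2: "ennreal s \<le> emeasure lebesgue V2" using Eleb by simp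
    have "ennreal (q * s) = ennreal q * ennreal s" using q0 s0 by (simp add: ennreal_mult)
    also have "\<dots> \<le> ennreal q * emeasure lebesgue V2" using EV2 by (intro mult_left_mono) auto
    also have "\<dots> \<le> emeasure ?\<mu> V2" by (rule m2)
    also have "\<dots> \<le> emeasure ?\<mu> V1" using V21 V1sets by (intro emeasure_mono) auto
    also have "\<dots> \<le> ennreal p * emeasure lebesgue V1" by (rule m1)
    also have "\<dots> \<le> ennreal p * emeasure lebesgue U"
      using V1U Usets by (intro mult_left_mono emeasure_mono) auto
    also have "\<dots> \<le> ennreal p * ennreal (s + \<epsilon>)" using Ule by (intro mult_left_mono) auto
    also have "\<dots> = ennreal (p * (s + \<epsilon>))" using p0 s0 that by (simp add: ennreal_mult)
    finally show ?thesis using p0 s0 that by (subst (asm) ennreal_le_iff) auto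
  qed
  have "s = 0"
  proof (rule ccontr)
    assume "s \<noteq> 0"
    with s0 have "s > 0" by simp
    define \<epsilon> where "\<epsilon> = (q - p) * s / (2 * p)"
    have "\<epsilon> > 0" using \<open>s > 0\<close> p0 pq by (simp add: \<epsilon>_def)
    from key[OF this] have "q * s \<le> p * s + p * \<epsilon>" by (simp add: algebra_simps)
    also have "p * \<epsilon> = (q - p) * s / 2" using p0 by (simp add: \<epsilon>_def)
    moreover have "(q - p) * s = q * s - p * s" by (simp add: algebra_simps)
    ultimately have "(q - p) * s \<le> 0" by linarith
    with \<open>s > 0\<close> pq show False by (simp add: mult_le_0_iff)
  qed
  then show ?thesis using Es by (simp add: negligible_iff_measure s_def)
qed




lemma open_Q_less:
  fixes \<phi> :: "real \<Rightarrow> real"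
  assumes cont: "continuous_on UNIV \<phi>"
  shows "open {x. y \<noteq> x \<and> \<bar>y - x\<bar> < r \<and> (\<phi> y - \<phi> x) / (y - x) < p}"
proof -
  have eq: "{x. y \<noteq> x \<and> \<bar>y - x\<bar> < r \<and> (\<phi> y - \<phi> x) / (y - x) < p}
      = (ball y r - {y}) \<inter> (\<lambda>x. (\<phi> y - \<phi> x) / (y - x)) -` {..<p}"
    by (auto simp: dist_real_def)
  have "continuous_on (ball y r - {y}) (\<lambda>x. (\<phi> y - \<phi> x) / (y - x))"
    by (intro continuous_intros continuous_on_subset[OF cont]) auto
  then show ?thesis unfolding eq
    by (intro continuous_open_preimage) auto
qed

lemma open_Q_greater:
  fixes \<phi> :: "real \<Rightarrow> real"
  assumes cont: "continuous_on UNIV \<phi>"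
  shows "open {x. y \<noteq> x \<and> \<bar>y - x\<bar> < r \<and> q < (\<phi> y - \<phi> x) / (y - x)}"
proof -
  have eq: "{x. y \<noteq> x \<and> \<bar>y - x\<bar> < r \<and> q < (\<phi> y - \<phi> x) / (y - x)}
      = (ball y r - {y}) \<inter> (\<lambda>x. (\<phi> y - \<phi> x) / (y - x)) -` {q<..}"
    by (auto simp: dist_real_def)
  have "continuous_on (ball y r - {y}) (\<lambda>x. (\<phi> y - \<phi> x) / (y - x))"
    by (intro continuous_intros continuous_on_subset[OF cont]) auto
  then show ?thesis unfolding eq
    by (intro continuous_open_preimage) auto
qed

lemma ae_diff:
  fixes \<phi> :: "real \<Rightarrow> real"
  assumes mono: "mono \<phi>" and lip: "M-lipschitz_on UNIV \<phi>"
  shows "negligible {x \<in> {0<..<1}. \<not> \<phi> differentiable (at x)}"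
proof -
  have cont: "continuous_on UNIV \<phi>" by (rule lipschitz_on_continuous_on[OF lip])
  define Q where "Q = (\<lambda>x y. (\<phi> y - \<phi> x) / (y - x))"
  have Qsym: "Q x y = Q y x" for x y
    by (simp add: Q_def divide_simps) (simp add: algebra_simps)
  have Qnn: "0 \<le> Q x y" for x y
  proof (cases "x \<le> y")
    case True then show ?thesis using mono by (simp add: Q_def mono_def divide_nonneg_nonneg)
  next
    case False then show ?thesis using mono
      by (simp add: Q_def mono_def divide_nonpos_nonpos)
  qed
  have QM: "Q x y \<le> M" for x y
  proof (cases "x = y")
    case True then show ?thesis using lipschitz_on_nonneg[OF lip] by (simp add: Q_def)
  next
    case False
    have "\<bar>\<phi> y - \<phi> x\<bar> \<le> M * \<bar>y - x\<bar>" using lipschitz_onD[OF lip, of y x] by (simp add: dist_real_def)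
    then have "\<bar>Q x y\<bar> \<le> M" using False by (simp add: Q_def abs_divide divide_le_eq)
    then show ?thesis by simp
  qed
  have Qcd: "\<phi> (max x y) - \<phi> (min x y) = Q x y * (max x y - min x y)" if "x \<noteq> y" for x y
    using that by (cases "x \<le> y") (auto simp: Q_def Qsym[of x y] field_simps)
  define Lo where "Lo p = {x. \<forall>\<delta>>0. \<exists>y. y \<noteq> x \<and> \<bar>y - x\<bar> < \<delta> \<and> Q x y < p}" for p
  define Hi where "Hi q = {x. \<forall>\<delta>>0. \<exists>y. y \<noteq> x \<and> \<bar>y - x\<bar> < \<delta> \<and> q < Q x y}" for q
  define E where "E p q = {0<..<1} \<inter> Lo p \<inter> Hi q" for p q
  have Lo_eq: "Lo p = (\<Inter>n. \<Union>y. {x. y \<noteq> x \<and> \<bar>y - x\<bar> < 1 / Suc n \<and> (\<phi> y - \<phi> x) / (y - x) < p})" for p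
  proof (intro equalityI subsetI)
    fix x assume "x \<in> Lo p"
    then show "x \<in> (\<Inter>n. \<Union>y. {x. y \<noteq> x \<and> \<bar>y - x\<bar> < 1 / Suc n \<and> (\<phi> y - \<phi> x) / (y - x) < p})"
      unfolding Lo_def Q_def by (auto simp del: of_nat_Suc)
  next
    fix x assume x: "x \<in> (\<Inter>n. \<Union>y. {x. y \<noteq> x \<and> \<bar>y - x\<bar> < 1 / Suc n \<and> (\<phi> y - \<phi> x) / (y - x) < p})"
    show "x \<in> Lo p" unfolding Lo_def Q_def
    proof (intro CollectI allI impI)
      fix \<delta> :: real assume "\<delta> > 0"
      then obtain n where n: "1 / Suc n < \<delta>" using nat_approx_posE by blast
      from x have "x \<in> (\<Union>y. {x. y \<noteq> x \<and> \<bar>y - x\<bar> < 1 / Suc n \<and> (\<phi> y - \<phi> x) / (y - x) < p})" by blast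
      then obtain y where "y \<noteq> x" "\<bar>y - x\<bar> < 1 / Suc n" "(\<phi> y - \<phi> x) / (y - x) < p" by blast
      then show "\<exists>y. y \<noteq> x \<and> \<bar>y - x\<bar> < \<delta> \<and> (\<phi> y - \<phi> x) / (y - x) < p" using n
        by (intro exI[of _ y]) auto
    qed
  qed
  have Hi_eq: "Hi q = (\<Inter>n. \<Union>y. {x. y \<noteq> x \<and> \<bar>y - x\<bar> < 1 / Suc n \<and> q < (\<phi> y - \<phi> x) / (y - x)})" for q
  proof (intro equalityI subsetI)
    fix x assume "x \<in> Hi q"
    then show "x \<in> (\<Inter>n. \<Union>y. {x. y \<noteq> x \<and> \<bar>y - x\<bar> < 1 / Suc n \<and> q < (\<phi> y - \<phi> x) / (y - x)})"
      unfolding Hi_def Q_def by (auto simp del: of_nat_Suc)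
  next
    fix x assume x: "x \<in> (\<Inter>n. \<Union>y. {x. y \<noteq> x \<and> \<bar>y - x\<bar> < 1 / Suc n \<and> q < (\<phi> y - \<phi> x) / (y - x)})"
    show "x \<in> Hi q" unfolding Hi_def Q_def
    proof (intro CollectI allI impI)
      fix \<delta> :: real assume "\<delta> > 0"
      then obtain n where n: "1 / Suc n < \<delta>" using nat_approx_posE by blast
      from x have "x \<in> (\<Union>y. {x. y \<noteq> x \<and> \<bar>y - x\<bar> < 1 / Suc n \<and> q < (\<phi> y - \<phi> x) / (y - x)})" by blast
      then obtain y where "y \<noteq> x" "\<bar>y - x\<bar> < 1 / Suc n" "q < (\<phi> y - \<phi> x) / (y - x)" by blast
      then show "\<exists>y. y \<noteq> x \<and> \<bar>y - x\<bar> < \<delta> \<and> q < (\<phi> y - \<phi> x) / (y - x)" using n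
        by (intro exI[of _ y]) auto
    qed
  qed
  have Lo_sets: "Lo p \<in> sets borel" for p
    unfolding Lo_eq by (rule sets.countable_INT'') (auto intro!: borel_open open_UN open_Q_less[OF cont])
  have Hi_sets: "Hi q \<in> sets borel" for q
    unfolding Hi_eq by (rule sets.countable_INT'') (auto intro!: borel_open open_UN open_Q_greater[OF cont])
  have Elm: "E p q \<in> lmeasurable" for p q
  proof (rule bounded_set_imp_lmeasurable)
    show "bounded (E p q)" unfolding E_def by (rule bounded_subset[of "{0<..<1}"]) auto
    show "E p q \<in> sets lebesgue" unfolding E_def using Lo_sets Hi_sets
      by (intro sets.Int borel_imp_lebesgue) auto
  qed
  have negE: "negligible (E p q)" if "p < q" for p q
  proof (rule core[OF mono cont Elm that])
    fix x e :: real assume x: "x \<in> E p q" and "e > 0"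
    then obtain y where y: "y \<noteq> x" "\<bar>y - x\<bar> < e" "Q x y < p" by (auto simp: E_def Lo_def)
    show "\<exists>c d. c < d \<and> c \<le> x \<and> x \<le> d \<and> d - c < e \<and> \<phi> d - \<phi> c < p * (d - c)"
    proof (intro exI conjI)
      show "min x y < max x y" "min x y \<le> x" "x \<le> max x y" "max x y - min x y < e" using y by auto
      have "\<phi> (max x y) - \<phi> (min x y) = Q x y * (max x y - min x y)" by (rule Qcd) (use y(1) in auto)
      also have "\<dots> < p * (max x y - min x y)" using y by (intro mult_strict_right_mono) auto
      finally show "\<phi> (max x y) - \<phi> (min x y) < p * (max x y - min x y)" .
    qed
  next
    fix x e :: real assume x: "x \<in> E p q" and "e > 0"
    then obtain y where y: "y \<noteq> x" "\<bar>y - x\<bar> < e" "q < Q x y" by (auto simp: E_def Hi_def)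
    show "\<exists>c d. c < d \<and> c \<le> x \<and> x \<le> d \<and> d - c < e \<and> \<phi> d - \<phi> c > q * (d - c)"
    proof (intro exI conjI)
      show "min x y < max x y" "min x y \<le> x" "x \<le> max x y" "max x y - min x y < e" using y by auto
      have "\<phi> (max x y) - \<phi> (min x y) = Q x y * (max x y - min x y)" by (rule Qcd) (use y(1) in auto)
      moreover have "q * (max x y - min x y) < Q x y * (max x y - min x y)" using y by (intro mult_strict_right_mono) auto
      ultimately show "\<phi> (max x y) - \<phi> (min x y) > q * (max x y - min x y)" by simp
    qed
  qed
  have sub: "{x \<in> {0<..<1}. \<not> \<phi> differentiable (at x)} \<subseteq>
      \<Union>((\<lambda>(p,q). if p < q then E p q else {}) ` (\<rat> \<times> \<rat>))"
  proof (rule subsetI, rule ccontr)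
    fix x assume x: "x \<in> {x \<in> {0<..<1}. \<not> \<phi> differentiable (at x)}"
      and nx: "x \<notin> \<Union>((\<lambda>(p,q). if p < q then E p q else {}) ` (\<rat> \<times> \<rat>))"
    have noPQ: "\<not> (x \<in> Lo p \<and> x \<in> Hi q)" if "p \<in> \<rat>" "q \<in> \<rat>" "p < q" for p q
    proof
      assume "x \<in> Lo p \<and> x \<in> Hi q"
      then have "x \<in> (\<lambda>(p,q). if p < q then E p q else {}) (p,q)" using x that by (simp add: E_def)
      moreover have "(p,q) \<in> \<rat> \<times> \<rat>" using that by simp
      ultimately show False using nx by blast
    qed
    define R where "R = {r. eventually (\<lambda>y. r < Q x y) (at x)}"
    have R1: "-1 \<in> R" unfolding R_def
    proof (intro CollectI always_eventually allI)
      fix y show "-1 < Q x y" using Qnn[of x y] by simp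
    qed
    have RM: "r \<le> M" if "r \<in> R" for r
    proof (rule ccontr)
      assume "\<not> r \<le> M"
      from that have "eventually (\<lambda>y. r < Q x y) (at x)" by (simp add: R_def)
      then obtain y where "r < Q x y" using eventually_happens'[OF trivial_limit_at] by blast
      with QM[of x y] \<open>\<not> r \<le> M\<close> show False by simp
    qed
    have bdd: "bdd_above R" using RM by (intro bdd_aboveI[of _ M]) blast
    define \<alpha> where "\<alpha> = Sup R"
    have lim: "((\<lambda>y. Q x y) \<longlongrightarrow> \<alpha>) (at x)"
    proof (rule order_tendstoI)
      fix a assume "a < \<alpha>"
      then obtain r where "r \<in> R" "a < r" using less_cSup_iff[of R a] R1 bdd by (auto simp: \<alpha>_def)
      then show "eventually (\<lambda>y. a < Q x y) (at x)"
        by (auto simp: R_def elim: eventually_mono)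
    next
      fix a assume "\<alpha> < a"
      obtain p where p: "p \<in> \<rat>" "\<alpha> < p" "p < a" using Rats_dense_in_real[OF \<open>\<alpha> < a\<close>] by blast
      obtain q where q: "q \<in> \<rat>" "p < q" "q < a" using Rats_dense_in_real[OF \<open>p < a\<close>] by blast
      define p' where "p' = (\<alpha> + p) / 2"
      have p': "\<alpha> < p'" "p' < p" using p by (auto simp: p'_def)
      have "p' \<notin> R" using cSup_upper[OF _ bdd, of p'] p' by (auto simp: \<alpha>_def)
      then have "\<not> eventually (\<lambda>y. p' < Q x y) (at x)" by (simp add: R_def)
      then have nev: "\<forall>\<delta>>0. \<exists>y. y \<noteq> x \<and> \<bar>y - x\<bar> < \<delta> \<and> \<not> p' < Q x y"
        unfolding eventually_at by (auto simp: dist_real_def)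
      have "x \<in> Lo p" unfolding Lo_def
      proof (intro CollectI allI impI)
        fix \<delta> :: real assume "\<delta> > 0"
        then obtain y where "y \<noteq> x" "\<bar>y - x\<bar> < \<delta>" "\<not> p' < Q x y" using nev by blast
        then show "\<exists>y. y \<noteq> x \<and> \<bar>y - x\<bar> < \<delta> \<and> Q x y < p" using p'(2)
          by (intro exI[of _ y]) auto
      qed
      show "eventually (\<lambda>y. Q x y < a) (at x)"
      proof (rule ccontr)
        assume "\<not> eventually (\<lambda>y. Q x y < a) (at x)"
        then have nev2: "\<forall>\<delta>>0. \<exists>y. y \<noteq> x \<and> \<bar>y - x\<bar> < \<delta> \<and> \<not> Q x y < a"
          unfolding eventually_at by (auto simp: dist_real_def)
        have "x \<in> Hi q" unfolding Hi_def
        proof (intro CollectI allI impI)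
          fix \<delta> :: real assume "\<delta> > 0"
          then obtain y where "y \<noteq> x" "\<bar>y - x\<bar> < \<delta>" "\<not> Q x y < a" using nev2 by blast
          then show "\<exists>y. y \<noteq> x \<and> \<bar>y - x\<bar> < \<delta> \<and> q < Q x y" using q(3)
            by (intro exI[of _ y]) auto
        qed
        with \<open>x \<in> Lo p\<close> noPQ[OF p(1) q(1) q(2)] show False by blast
      qed
    qed
    then have "(\<phi> has_field_derivative \<alpha>) (at x)"
      by (simp add: has_field_derivative_iff Q_def)
    then have "\<phi> differentiable (at x)" using real_differentiable_def by blast
    with x show False by simp
  qed
  have "negligible (\<Union>((\<lambda>(p,q). if p < q then E p q else {}) ` (\<rat> \<times> \<rat>)))"
  proof (rule negligible_countable_Union)
    show "countable ((\<lambda>(p,q). if p < q then E p q else {}) ` (\<rat> \<times> \<rat>))"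
      by (intro countable_image countable_SIGMA countable_rat)
  qed (auto intro: negE)
  then show ?thesis using sub negligible_subset by blast
qed



lemma clamp_diff: "\<bar>max a (min b u) - max a (min b v)\<bar> \<le> \<bar>u - (v::real)\<bar>"
  by (simp add: max_def min_def abs_if)

theorem mainTheorem7:
  fixes f :: "real \<Rightarrow> real" and a b :: real
  assumes "\<exists>L. L-lipschitz_on {0..1} f"
    and "a < b"
  shows "a - b \<le> (LINT t : {t \<in> {0..1}. f t \<in> {a<..<b}} | lborel. deriv f t)
       \<and> (LINT t : {t \<in> {0..1}. f t \<in> {a<..<b}} | lborel. deriv f t) \<le> b - a"
proof -
  obtain L where L: "L-lipschitz_on {0..1} f" using assms(1) by blast
  have L0: "L \<ge> 0" using lipschitz_on_nonneg[OF L] .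
  have contf: "continuous_on {0..1} f" using lipschitz_on_continuous_on[OF L] .
  define cl where "cl x = max 0 (min 1 x)" for x :: real
  have cl01: "cl x \<in> {0..1}" for x by (simp add: cl_def)
  have cl_lip: "\<bar>cl x - cl y\<bar> \<le> \<bar>x - y\<bar>" for x y unfolding cl_def by (rule clamp_diff)
  define G where "G x = max a (min b (f (cl x)))" for x
  have Glip: "\<bar>G x - G y\<bar> \<le> L * \<bar>x - y\<bar>" for x y
  proof -
    have "\<bar>G x - G y\<bar> \<le> \<bar>f (cl x) - f (cl y)\<bar>" unfolding G_def by (rule clamp_diff)
    also have "\<dots> \<le> L * \<bar>cl x - cl y\<bar>"
      using lipschitz_onD[OF L cl01 cl01, of x y] by (simp add: dist_real_def)
    also have "\<dots> \<le> L * \<bar>x - y\<bar>" using cl_lip L0 by (intro mult_left_mono) auto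
    finally show ?thesis .
  qed
  have Gab: "a \<le> G x" "G x \<le> b" for x using assms(2) by (auto simp: G_def)
  define \<phi> where "\<phi> x = G x + (L + 1) * x" for x
  have mono\<phi>: "mono \<phi>"
  proof (rule monoI)
    fix x y :: real assume "x \<le> y"
    have "G x - G y \<le> L * (y - x)" using Glip[of x y] \<open>x \<le> y\<close> by (simp add: abs_le_iff)
    then show "\<phi> x \<le> \<phi> y" using \<open>x \<le> y\<close> by (simp add: \<phi>_def algebra_simps)
  qed
  have lip\<phi>: "(2 * L + 1)-lipschitz_on UNIV \<phi>"
  proof (rule lipschitz_onI)
    fix x y :: real
    have "\<bar>\<phi> x - \<phi> y\<bar> \<le> \<bar>G x - G y\<bar> + (L + 1) * \<bar>x - y\<bar>"
    proof -
      have "\<phi> x - \<phi> y = (G x - G y) + (L + 1) * (x - y)" by (simp add: \<phi>_def algebra_simps)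
      then have "\<bar>\<phi> x - \<phi> y\<bar> \<le> \<bar>G x - G y\<bar> + \<bar>(L + 1) * (x - y)\<bar>"
        by (metis abs_triangle_ineq)
      then show ?thesis using L0 by (simp add: abs_mult)
    qed
    also have "\<dots> \<le> (2 * L + 1) * \<bar>x - y\<bar>" using Glip[of x y] by (simp add: algebra_simps)
    finally show "dist (\<phi> x) (\<phi> y) \<le> (2 * L + 1) * dist x y" by (simp add: dist_real_def)
  qed (use L0 in simp)
  have cont\<phi>: "continuous_on UNIV \<phi>" using lipschitz_on_continuous_on[OF lip\<phi>] .
  define D where "D = {x \<in> {0<..<1}. \<phi> differentiable (at x)}"
  have negD: "negligible ({0<..<1} - D)"
  proof -
    have "{0<..<1} - D = {x \<in> {0<..<1}. \<not> \<phi> differentiable (at x)}" by (auto simp: D_def)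
    then show ?thesis using ae_diff[OF mono\<phi> lip\<phi>] by simp
  qed
  define \<phi>' where "\<phi>' = deriv \<phi>"
  have der\<phi>: "(\<phi> has_field_derivative \<phi>' x) (at x)" if "x \<in> D" for x
    using that DERIV_deriv_iff_real_differentiable by (auto simp: D_def \<phi>'_def)
  have derG: "(G has_field_derivative (\<phi>' x - (L + 1))) (at x)" if "x \<in> D" for x
  proof -
    have "((\<lambda>x. \<phi> x - (L + 1) * x) has_field_derivative (\<phi>' x - (L + 1) * 1)) (at x)"
      by (intro DERIV_diff der\<phi>[OF that] DERIV_cmult DERIV_ident)
    moreover have "(\<lambda>x. \<phi> x - (L + 1) * x) = G" by (auto simp: \<phi>_def)
    ultimately show ?thesis by simp
  qed
  have derivG: "deriv G x = \<phi>' x - (L + 1)" if "x \<in> D" for x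
    using DERIV_imp_deriv[OF derG[OF that]] .
  have \<phi>'nn: "\<phi>' x \<ge> 0" if xD: "x \<in> D" for x
  proof (rule ccontr)
    assume "\<not> \<phi>' x \<ge> 0"
    then obtain d where "d > 0" "\<forall>h>0. h < d \<longrightarrow> \<phi> x > \<phi> (x + h)"
      using DERIV_neg_dec_right[OF der\<phi>[OF xD]] by auto
    then have "\<phi> x > \<phi> (x + d/2)" by auto
    moreover have "\<phi> x \<le> \<phi> (x + d/2)" using mono\<phi> \<open>d > 0\<close> by (simp add: mono_def)
    ultimately show False by simp
  qed
  have Dsets: "D \<in> sets lebesgue"
  proof -
    have "D = {0<..<1} - ({0<..<1} - D)" by (auto simp: D_def)
    then show ?thesis using negD by (metis borel_imp_lebesgue borel_open open_greaterThanLessThan negligible_imp_sets sets.Diff)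
  qed
  define N0 where "N0 = {0..1} - D"
  have negN0: "negligible N0"
  proof -
    have "N0 \<subseteq> {0, 1} \<union> ({0<..<1} - D)" by (auto simp: N0_def D_def)
    moreover have "negligible ({0, 1} \<union> ({0<..<1} - D))" using negD by simp
    ultimately show ?thesis using negligible_subset by blast
  qed
  have negimg: "negligible (\<phi> ` N0)"
  proof (rule negligible_locally_Lipschitz_image[OF _ negN0])
    fix x assume "x \<in> N0"
    show "\<exists>T B. open T \<and> x \<in> T \<and> (\<forall>y\<in>N0 \<inter> T. norm (\<phi> y - \<phi> x) \<le> B * norm (y - x))"
      using lipschitz_onD[OF lip\<phi>] by (intro exI[of _ UNIV] exI[of _ "2 * L + 1"]) (auto simp: dist_real_def)
  qed simp
  have img01: "\<phi> ` {0..1} = {\<phi> 0..\<phi> 1}"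
  proof
    show "\<phi> ` {0..1} \<subseteq> {\<phi> 0..\<phi> 1}" using mono\<phi> by (auto simp: mono_def)
    show "{\<phi> 0..\<phi> 1} \<subseteq> \<phi> ` {0..1}"
    proof
      fix y assume "y \<in> {\<phi> 0..\<phi> 1}"
      then obtain x where "0 \<le> x" "x \<le> 1" "\<phi> x = y"
        using IVT'[of \<phi> 0 y 1] continuous_on_subset[OF cont\<phi>] by auto
      then show "y \<in> \<phi> ` {0..1}" by auto
    qed
  qed
  have imgD_sub: "\<phi> ` D \<subseteq> {\<phi> 0..\<phi> 1}" using img01 by (auto simp: D_def)
  have imgD_sup: "{\<phi> 0..\<phi> 1} - \<phi> ` D \<subseteq> \<phi> ` N0" using img01 by (auto simp: N0_def)
  have symneg: "negligible ({\<phi> 0..\<phi> 1} - \<phi> ` D \<union> (\<phi> ` D - {\<phi> 0..\<phi> 1}))"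
    using imgD_sub imgD_sup negimg negligible_subset by (metis Diff_eq_empty_iff sup_bot.right_neutral)
  have imgD_lm: "\<phi> ` D \<in> lmeasurable"
    using lmeasurable_negligible_symdiff[OF _ symneg] by simp
  have imgD_meas: "measure lebesgue (\<phi> ` D) = \<phi> 1 - \<phi> 0"
  proof -
    have "measure lebesgue (\<phi> ` D) = measure lebesgue {\<phi> 0..\<phi> 1}"
      using measure_negligible_symdiff[OF _ symneg] by simp
    also have "\<dots> = \<phi> 1 - \<phi> 0" using mono\<phi> by (simp add: mono_def)
    finally show ?thesis .
  qed
  have inj: "inj_on \<phi> D"
  proof (rule inj_onI)
    fix x y assume "\<phi> x = \<phi> y" "x \<in> D" "y \<in> D"
    have "\<bar>x - y\<bar> \<le> \<bar>\<phi> x - \<phi> y\<bar>"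
    proof (cases "x \<le> y")
      case True
      have "G x - G y \<le> L * (y - x)" using Glip[of x y] True by (simp add: abs_le_iff)
      then show ?thesis using True by (simp add: \<phi>_def algebra_simps abs_if)
    next
      case False
      have "G y - G x \<le> L * (x - y)" using Glip[of y x] False by (simp add: abs_le_iff)
      then show ?thesis using False by (simp add: \<phi>_def algebra_simps abs_if)
    qed
    then show "x = y" using \<open>\<phi> x = \<phi> y\<close> by simp
  qed
  have derD: "\<And>x. x \<in> D \<Longrightarrow> (\<phi> has_field_derivative \<phi>' x) (at x within D)"
    using der\<phi> by (rule has_field_derivative_at_within)
  have rhs: "(\<lambda>_. 1::real) absolutely_integrable_on \<phi> ` D \<and> integral (\<phi> ` D) (\<lambda>_. 1::real) = measure lebesgue (\<phi> ` D)"
  proof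
    have "(\<lambda>_. 1::real) integrable_on \<phi> ` D" using imgD_lm lmeasurable_iff_integrable_on by blast
    then show "(\<lambda>_. 1::real) absolutely_integrable_on \<phi> ` D"
      using absolutely_integrable_on_iff_nonneg[of "\<phi> ` D" "\<lambda>_. 1::real"] by simp
    show "integral (\<phi> ` D) (\<lambda>_. 1::real) = measure lebesgue (\<phi> ` D)"
      using lmeasure_integral[OF imgD_lm] by simp
  qed
  have cov: "(\<lambda>x. \<bar>\<phi>' x\<bar> * 1) absolutely_integrable_on D \<and>
           integral D (\<lambda>x. \<bar>\<phi>' x\<bar> * 1) = measure lebesgue (\<phi> ` D)"
    using has_absolute_integral_change_of_variables_1'[OF Dsets derD inj, of "\<lambda>_. 1" "measure lebesgue (\<phi> ` D)"] rhs
    by blast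
  have int\<phi>': "\<phi>' integrable_on D" and intD\<phi>': "integral D \<phi>' = \<phi> 1 - \<phi> 0"
  proof -
    have eq: "\<And>x. x \<in> D \<Longrightarrow> \<bar>\<phi>' x\<bar> * 1 = \<phi>' x" using \<phi>'nn by simp
    show "\<phi>' integrable_on D"
    proof -
      have "(\<lambda>x. \<bar>\<phi>' x\<bar> * 1) integrable_on D"
        using cov unfolding absolutely_integrable_on_def by (rule conjunct1[OF conjunct1])
      then show ?thesis by (rule integrable_eq) (rule eq)
    qed
    show "integral D \<phi>' = \<phi> 1 - \<phi> 0"
    proof -
      have "integral D \<phi>' = integral D (\<lambda>x. \<bar>\<phi>' x\<bar> * 1)" by (rule integral_cong) (simp add: \<phi>'nn abs_of_nonneg)
      also have "\<dots> = measure lebesgue (\<phi> ` D)" using cov by (rule conjunct2)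
      finally show ?thesis using imgD_meas by simp
    qed
  qed
  have D_lm: "D \<in> lmeasurable" and measD: "measure lebesgue D = 1"
  proof -
    have sd: "negligible ({0..1} - D \<union> (D - {0..1}))"
    proof -
      have "{0..1} - D \<union> (D - {0..1}) = N0" by (auto simp: N0_def D_def)
      then show ?thesis using negN0 by simp
    qed
    show "D \<in> lmeasurable" using lmeasurable_negligible_symdiff[OF _ sd] by simp
    show "measure lebesgue D = 1" using measure_negligible_symdiff[OF _ sd] by simp
  qed
  have intDG: "integral D (deriv G) = G 1 - G 0"
  proof -
    have "integral D (deriv G) = integral D (\<lambda>x. \<phi>' x - (L + 1))"
      by (rule integral_cong) (simp add: derivG)
    also have "\<dots> = integral D \<phi>' - integral D (\<lambda>x. L + 1)"
      by (rule integral_diff[OF int\<phi>' integrable_on_const[OF D_lm]])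
    also have "integral D (\<lambda>x. L + 1) = (L + 1) * integral D (\<lambda>x. 1)"
      using integral_mult_right[of D "L + 1" "\<lambda>x. 1::real"] by simp
    also have "integral D (\<lambda>x. 1::real) = 1" using lmeasure_integral[OF D_lm] measD by simp
    finally show ?thesis using intD\<phi>' by (simp add: \<phi>_def)
  qed
  define T where "T = {t \<in> {0..1}. f t \<in> {a<..<b}}"
  have derfG: "deriv f t = deriv G t" if "t \<in> T" "t \<in> {0<..<1}" for t
  proof -
    have ft: "a < f t" "f t < b" using that by (auto simp: T_def)
    have t01: "t \<in> {0..1}" using that by auto
    obtain d where d: "d > 0" "\<forall>x'\<in>{0..1}. dist x' t < d \<longrightarrow> dist (f x') (f t) < min (f t - a) (b - f t)"
      using contf ft t01 unfolding continuous_on_iff by (metis diff_gt_0_iff_gt min_less_iff_conj)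
    have ev: "eventually (\<lambda>y. f y = G y) (nhds t)"
      unfolding eventually_nhds_metric
    proof (intro exI[of _ "min d (min t (1 - t))"] conjI allI impI)
      show "0 < min d (min t (1 - t))" using d that by auto
      fix y assume y: "dist y t < min d (min t (1 - t))"
      then have y01: "y \<in> {0..1}" by (auto simp: dist_real_def)
      then have "cl y = y" by (simp add: cl_def)
      moreover have "dist (f y) (f t) < min (f t - a) (b - f t)" using d(2) y01 y by auto
      ultimately show "f y = G y" by (auto simp: G_def dist_real_def)
    qed
    have "(\<lambda>D. DERIV f t :> D) = (\<lambda>D. DERIV G t :> D)"
      using DERIV_cong_ev[OF refl ev refl] by auto
    then show ?thesis by (simp add: deriv_def)
  qed
  have derG0: "deriv G t = 0" if "t \<in> D" "t \<notin> T" for t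
  proof -
    have t01: "t \<in> {0..1}" "cl t = t" using that by (auto simp: D_def cl_def)
    have dG: "DERIV G t :> deriv G t" using derivG derG that(1) by simp
    have "f t \<le> a \<or> f t \<ge> b" using that t01 by (auto simp: T_def)
    then show ?thesis
    proof
      assume "f t \<le> a"
      then have "G t = a" using t01 assms(2) by (simp add: G_def)
      then show ?thesis using DERIV_local_min[OF dG zero_less_one] Gab by auto
    next
      assume "f t \<ge> b"
      then have "G t = b" using t01 assms(2) by (simp add: G_def)
      then show ?thesis using DERIV_local_max[OF dG zero_less_one] Gab by auto
    qed
  qed
  have intT: "integral T (deriv f) = G 1 - G 0"
  proof -
    define T' where "T' = T \<inter> {0<..<1}"
    have "integral T (deriv f) = integral T' (deriv f)"
    proof (rule integral_spike_set)
      show "negligible {x \<in> T - T'. deriv f x \<noteq> 0}"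
        by (rule negligible_subset[of "{0,1}"]) (auto simp: T'_def T_def)
      show "negligible {x \<in> T' - T. deriv f x \<noteq> 0}" by (rule negligible_subset[of "{}"]) (auto simp: T'_def)
    qed
    also have "\<dots> = integral T' (deriv G)"
      by (rule integral_cong) (auto simp: T'_def intro: derfG)
    also have "\<dots> = integral D (deriv G)"
    proof (rule integral_spike_set)
      show "negligible {x \<in> T' - D. deriv G x \<noteq> 0}"
        by (rule negligible_subset[OF negD]) (auto simp: T'_def)
      show "negligible {x \<in> D - T'. deriv G x \<noteq> 0}"
      proof (rule negligible_subset[of "{}"])
        show "{x \<in> D - T'. deriv G x \<noteq> 0} \<subseteq> {}"
        proof
          fix x assume x: "x \<in> {x \<in> D - T'. deriv G x \<noteq> 0}"
          then have "x \<in> D" "x \<notin> T" using D_def by (auto simp: T'_def)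
          then have "deriv G x = 0" by (rule derG0)
          with x show "x \<in> {}" by simp
        qed
      qed simp
    qed
    finally show ?thesis using intDG by simp
  qed
  have G01: "a - b \<le> G 1 - G 0" "G 1 - G 0 \<le> b - a" using Gab[of 0] Gab[of 1] by auto
  show ?thesis
  proof (cases "set_integrable lborel T (deriv f)")
    case True
    then have "(LINT t : T | lborel. deriv f t) = integral T (deriv f)"
      by (rule set_borel_integral_eq_integral)
    then show ?thesis using intT G01 by (simp add: T_def)
  next
    case False
    then have "(LINT t : T | lborel. deriv f t) = 0"
      by (simp add: set_integrable_def set_lebesgue_integral_def not_integrable_integral_eq)
    then show ?thesis using assms(2) by (simp add: T_def)
  qed
qed

end
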